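(* A ring $R$ is NJ-symmetric if and only if the corner ring $eRe$ is NJ-symmetric for every idempotent $e\in R$.
   Context: Rings are associative with identity ($eRe$ has identity $e$). $N(R)$ is the set of nilpotent elements, $J(R)$ the Jacobson radical. $R$ is NJ-symmetric if for all $a,b,c\in R$, $abc\in N(R)$ implies $bac\in J(R)$. *)

theory Defs
  imports "HOL-Algebra.Ideal"
begin

definition nilpotents :: "('a, 'b) ring_scheme \<Rightarrow> 'a set" where
  "nilpotents R = {a \<in> carrier R. \<exists>n::nat. a [^]\<^bsub>R\<^esub> n = \<zero>\<^bsub>R\<^esub>}"

definition left_ideal :: "'a set \<Rightarrow> ('a, 'b) ring_scheme \<Rightarrow> bool" where
  "left_ideal I R \<longleftrightarrow> additive_subgroup I R \<and>
     (\<forall>r\<in>carrier R. \<forall>a\<in>I. r \<otimes>\<^bsub>R\<^esub> a \<in> I)"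

definition maximal_left_ideal :: "'a set \<Rightarrow> ('a, 'b) ring_scheme \<Rightarrow> bool" where
  "maximal_left_ideal I R \<longleftrightarrow> left_ideal I R \<and> I \<noteq> carrier R \<and>
     (\<forall>J. left_ideal J R \<and> I \<subseteq> J \<longrightarrow> J = I \<or> J = carrier R)"

text \<open>Jacobson radical J(R): intersection of all maximal left ideals
  (equal to carrier R when there are none, i.e. for the zero ring).\<close>
definition jacobson_radical :: "('a, 'b) ring_scheme \<Rightarrow> 'a set" where
  "jacobson_radical R = carrier R \<inter> \<Inter>{I. maximal_left_ideal I R}"

definition NJ_symmetric :: "('a, 'b) ring_scheme \<Rightarrow> bool" where
  "NJ_symmetric R \<longleftrightarrow> (\<forall>a\<in>carrier R. \<forall>b\<in>carrier R. \<forall>c\<in>carrier R.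
     a \<otimes>\<^bsub>R\<^esub> b \<otimes>\<^bsub>R\<^esub> c \<in> nilpotents R \<longrightarrow>
     b \<otimes>\<^bsub>R\<^esub> a \<otimes>\<^bsub>R\<^esub> c \<in> jacobson_radical R)"

definition corner :: "('a, 'b) ring_scheme \<Rightarrow> 'a \<Rightarrow> ('a, 'b) ring_scheme" where
  "corner R e = R\<lparr>carrier := {e \<otimes>\<^bsub>R\<^esub> x \<otimes>\<^bsub>R\<^esub> e | x. x \<in> carrier R}, one := e\<rparr>"

end

theory Submission imports Defs begin

lemma corner_one: assumes "ring R" shows "corner R \<one>\<^bsub>R\<^esub> = R"
proof -
  interpret ring R by fact
  have "{\<one>\<^bsub>R\<^esub> \<otimes>\<^bsub>R\<^esub> x \<otimes>\<^bsub>R\<^esub> \<one>\<^bsub>R\<^esub> | x. x \<in> carrier R} = carrier R"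
  proof (intro equalityI subsetI)
    fix y assume "y \<in> {\<one>\<^bsub>R\<^esub> \<otimes>\<^bsub>R\<^esub> x \<otimes>\<^bsub>R\<^esub> \<one>\<^bsub>R\<^esub> | x. x \<in> carrier R}"
    then obtain x where "x \<in> carrier R" "y = \<one>\<^bsub>R\<^esub> \<otimes>\<^bsub>R\<^esub> x \<otimes>\<^bsub>R\<^esub> \<one>\<^bsub>R\<^esub>" by auto
    then show "y \<in> carrier R" by simp
  next
    fix y assume y: "y \<in> carrier R"
    then have "y = \<one>\<^bsub>R\<^esub> \<otimes>\<^bsub>R\<^esub> y \<otimes>\<^bsub>R\<^esub> \<one>\<^bsub>R\<^esub>" by simp
    then show "y \<in> {\<one>\<^bsub>R\<^esub> \<otimes>\<^bsub>R\<^esub> x \<otimes>\<^bsub>R\<^esub> \<one>\<^bsub>R\<^esub> | x. x \<in> carrier R}" using y by blast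
  qed
  then show ?thesis unfolding corner_def by simp
qed

lemma corner_simps [simp]:
  "mult (corner R e) = mult R" "one (corner R e) = e" "zero (corner R e) = zero R"
  "add (corner R e) = add R"
  by (simp_all add: corner_def)

lemma (in ring) left_idealI:
  assumes "H \<subseteq> carrier R" "\<zero> \<in> H" "\<And>a b. a \<in> H \<Longrightarrow> b \<in> H \<Longrightarrow> a \<oplus> b \<in> H"
    "\<And>a. a \<in> H \<Longrightarrow> \<ominus> a \<in> H" "\<And>r a. r \<in> carrier R \<Longrightarrow> a \<in> H \<Longrightarrow> r \<otimes> a \<in> H"
  shows "left_ideal H R"
  unfolding left_ideal_def
proof (intro conjI ballI)
  show "additive_subgroup H R"
    apply (rule additive_subgroupI)
    apply (rule add.subgroupI)
    using assms by (auto simp: a_inv_def[symmetric])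
qed (use assms in auto)

lemma (in ring) jac_left_inv:
  assumes x: "x \<in> jacobson_radical R" and r: "r \<in> carrier R"
  shows "\<exists>u\<in>carrier R. u \<otimes> (\<one> \<ominus> r \<otimes> x) = \<one>"
proof (rule ccontr)
  assume nu: "\<not> ?thesis"
  have xc: "x \<in> carrier R" using x unfolding jacobson_radical_def by auto
  define y where "y = \<one> \<ominus> r \<otimes> x"
  have yc: "y \<in> carrier R" using xc r unfolding y_def by simp
  define L where "L = {t \<otimes> y | t. t \<in> carrier R}"
  have L1: "\<one> \<notin> L" using nu unfolding L_def y_def by auto
  have Lid: "left_ideal L R"
  proof (rule left_idealI)
    show "L \<subseteq> carrier R" using yc unfolding L_def by auto
    show "\<zero> \<in> L" unfolding L_def using yc by (auto intro!: exI[of _ \<zero>])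
    fix a b assume "a \<in> L" "b \<in> L"
    then obtain t1 t2 where "t1 \<in> carrier R" "t2 \<in> carrier R" "a = t1 \<otimes> y" "b = t2 \<otimes> y"
      unfolding L_def by auto
    then show "a \<oplus> b \<in> L" unfolding L_def using yc
      by (auto intro!: exI[of _ "t1 \<oplus> t2"] simp: l_distr)
  next
    fix a assume "a \<in> L"
    then obtain t1 where "t1 \<in> carrier R" "a = t1 \<otimes> y"
      unfolding L_def by auto
    then show "\<ominus> a \<in> L" unfolding L_def using yc
      by (auto intro!: exI[of _ "\<ominus> t1"] simp: l_minus)
  next
    fix s a assume "s \<in> carrier R" "a \<in> L"
    then obtain t1 where "t1 \<in> carrier R" "a = t1 \<otimes> y"
      unfolding L_def by auto
    then show "s \<otimes> a \<in> L" unfolding L_def using yc \<open>s \<in> carrier R\<close>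
      by (auto intro!: exI[of _ "s \<otimes> t1"] simp: m_assoc)
  qed
  define A where "A = {I. left_ideal I R \<and> L \<subseteq> I \<and> \<one> \<notin> I}"
  have "\<exists>M\<in>A. \<forall>X\<in>A. M \<subseteq> X \<longrightarrow> X = M"
  proof (rule subset_Zorn_nonempty)
    show "A \<noteq> {}" using Lid L1 unfolding A_def by auto
  next
    fix C assume C: "C \<noteq> {}" "subset.chain A C"
    have CA: "\<And>I. I \<in> C \<Longrightarrow> left_ideal I R \<and> L \<subseteq> I \<and> \<one> \<notin> I"
      using C unfolding subset.chain_def A_def by auto
    have ch: "\<And>I J. I \<in> C \<Longrightarrow> J \<in> C \<Longrightarrow> I \<subseteq> J \<or> J \<subseteq> I"
      using C unfolding subset.chain_def by auto
    have sub: "\<And>I. I \<in> C \<Longrightarrow> additive_subgroup I R"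
      using CA unfolding left_ideal_def by auto
    have "left_ideal (\<Union>C) R"
    proof (rule left_idealI)
      show "\<Union>C \<subseteq> carrier R" using additive_subgroup.a_subset[OF sub] by blast
      obtain I where "I \<in> C" using C by auto
      then show "\<zero> \<in> \<Union>C" using additive_subgroup.zero_closed[OF sub] by blast
    next
      fix a b assume "a \<in> \<Union>C" "b \<in> \<Union>C"
      then obtain I J where IJ: "I \<in> C" "J \<in> C" "a \<in> I" "b \<in> J" by auto
      show "a \<oplus> b \<in> \<Union>C"
      proof (cases "I \<subseteq> J")
        case True
        then have "a \<oplus> b \<in> J" using IJ additive_subgroup.a_closed[OF sub[OF IJ(2)]] by blast
        then show ?thesis using IJ by blast
      next
        case False
        then have "J \<subseteq> I" using ch IJ by blast
        then have "a \<oplus> b \<in> I" using IJ additive_subgroup.a_closed[OF sub[OF IJ(1)]] by blast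
        then show ?thesis using IJ by blast
      qed
    next
      fix a assume "a \<in> \<Union>C"
      then obtain I where I: "I \<in> C" "a \<in> I" by blast
      then have "\<ominus> a \<in> I" using additive_subgroup.a_inv_closed[OF sub[OF I(1)]] by blast
      then show "\<ominus> a \<in> \<Union>C" using I by blast
    next
      fix s a assume "s \<in> carrier R" "a \<in> \<Union>C"
      then show "s \<otimes> a \<in> \<Union>C" using CA unfolding left_ideal_def by blast
    qed
    moreover have "L \<subseteq> \<Union>C" using CA C by blast
    moreover have "\<one> \<notin> \<Union>C" using CA by blast
    ultimately show "\<Union>C \<in> A" unfolding A_def by blast
  qed
  then obtain M where MA: "M \<in> A" and Mmax: "\<forall>X\<in>A. M \<subseteq> X \<longrightarrow> X = M" by blast
  have Mli: "left_ideal M R" and LM: "L \<subseteq> M" and M1: "\<one> \<notin> M" using MA unfolding A_def by auto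
  have "maximal_left_ideal M R"
    unfolding maximal_left_ideal_def
  proof (intro conjI allI impI)
    show "left_ideal M R" by fact
    show "M \<noteq> carrier R" using M1 by auto
    fix J assume J: "left_ideal J R \<and> M \<subseteq> J"
    show "J = M \<or> J = carrier R"
    proof (cases "\<one> \<in> J")
      case True
      have "additive_subgroup J R" using J unfolding left_ideal_def by blast
      then have "J \<subseteq> carrier R" using additive_subgroup.a_subset by blast
      moreover have "carrier R \<subseteq> J"
      proof
        fix s assume "s \<in> carrier R"
        then have "s \<otimes> \<one> \<in> J" using J True unfolding left_ideal_def by blast
        then show "s \<in> J" using \<open>s \<in> carrier R\<close> by simp
      qed
      ultimately show ?thesis by blast
    next
      case False
      then have "J \<in> A" using J LM unfolding A_def by auto
      then show ?thesis using Mmax J by blast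
    qed
  qed
  then have xM: "x \<in> M" using x unfolding jacobson_radical_def by blast
  have rxM: "r \<otimes> x \<in> M" using Mli xM r unfolding left_ideal_def by blast
  have "y = \<one> \<otimes> y" using yc by simp
  then have "y \<in> L" unfolding L_def by blast
  then have yM: "y \<in> M" using LM by blast
  have Msub: "additive_subgroup M R" using Mli unfolding left_ideal_def by blast
  have "y \<oplus> r \<otimes> x \<in> M" using additive_subgroup.a_closed[OF Msub yM rxM] .
  moreover have "y \<oplus> r \<otimes> x = \<one>" unfolding y_def using r xc
    by (simp add: a_minus_def a_assoc l_neg)
  ultimately show False using M1 by simp
qed

lemma (in ring) corner_carrier:
  assumes e: "e \<in> carrier R" "e \<otimes> e = e"
  shows "carrier (corner R e) = {y \<in> carrier R. e \<otimes> y = y \<and> y \<otimes> e = y}"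
proof -
  have "{e \<otimes> x \<otimes> e | x. x \<in> carrier R} = {y \<in> carrier R. e \<otimes> y = y \<and> y \<otimes> e = y}"
  proof (intro equalityI subsetI)
    fix y assume "y \<in> {e \<otimes> x \<otimes> e | x. x \<in> carrier R}"
    then obtain x where x: "x \<in> carrier R" "y = e \<otimes> x \<otimes> e" by auto
    have 1: "e \<otimes> y = y" using x e by (metis m_assoc m_closed)
    have 2: "y \<otimes> e = y" using x e by (metis m_assoc m_closed)
    show "y \<in> {y \<in> carrier R. e \<otimes> y = y \<and> y \<otimes> e = y}" using x e 1 2 by simp
  next
    fix y assume "y \<in> {y \<in> carrier R. e \<otimes> y = y \<and> y \<otimes> e = y}"
    then show "y \<in> {e \<otimes> x \<otimes> e | x. x \<in> carrier R}" by (auto intro!: exI[of _ y])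
  qed
  then show ?thesis unfolding corner_def by simp
qed

lemma (in ring) corner_ring:
  assumes e: "e \<in> carrier R" "e \<otimes> e = e"
  shows "ring (corner R e)"
proof -
  note cc = corner_carrier[OF e]
  have mem: "\<And>y. y \<in> carrier (corner R e) \<longleftrightarrow> y \<in> carrier R \<and> e \<otimes> y = y \<and> y \<otimes> e = y"
    using cc by simp
  show ?thesis
  proof (rule ringI)
    show "abelian_group (corner R e)"
    proof (rule abelian_groupI)
      fix x y assume "x \<in> carrier (corner R e)" "y \<in> carrier (corner R e)"
      then have x: "x \<in> carrier R" "e \<otimes> x = x" "x \<otimes> e = x" and y: "y \<in> carrier R" "e \<otimes> y = y" "y \<otimes> e = y"
        using mem by auto
      show "x \<oplus>\<^bsub>corner R e\<^esub> y \<in> carrier (corner R e)" unfolding corner_simps mem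
        using x y e by (simp add: r_distr l_distr)
      show "x \<oplus>\<^bsub>corner R e\<^esub> y = y \<oplus>\<^bsub>corner R e\<^esub> x" unfolding corner_simps
        using x(1) y(1) by (rule a_comm)
    next
      show "\<zero>\<^bsub>corner R e\<^esub> \<in> carrier (corner R e)" unfolding corner_simps mem using e by simp
    next
      fix x y z assume "x \<in> carrier (corner R e)" "y \<in> carrier (corner R e)" "z \<in> carrier (corner R e)"
      then have "x \<in> carrier R" "y \<in> carrier R" "z \<in> carrier R" using mem by auto
      then show "x \<oplus>\<^bsub>corner R e\<^esub> y \<oplus>\<^bsub>corner R e\<^esub> z = x \<oplus>\<^bsub>corner R e\<^esub> (y \<oplus>\<^bsub>corner R e\<^esub> z)"
        unfolding corner_simps by (rule a_assoc)
    next
      fix x assume "x \<in> carrier (corner R e)"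
      then have x: "x \<in> carrier R" "e \<otimes> x = x" "x \<otimes> e = x" using mem by auto
      show "\<zero>\<^bsub>corner R e\<^esub> \<oplus>\<^bsub>corner R e\<^esub> x = x" unfolding corner_simps using x by simp
      have "\<ominus> x \<in> carrier (corner R e)" unfolding mem using x e by (simp add: r_minus l_minus)
      moreover have "\<ominus> x \<oplus>\<^bsub>corner R e\<^esub> x = \<zero>\<^bsub>corner R e\<^esub>" unfolding corner_simps using x by (simp add: l_neg)
      ultimately show "\<exists>y\<in>carrier (corner R e). y \<oplus>\<^bsub>corner R e\<^esub> x = \<zero>\<^bsub>corner R e\<^esub>" by blast
    qed
  next
    show "monoid (corner R e)"
    proof (rule monoidI)
      fix x y assume "x \<in> carrier (corner R e)" "y \<in> carrier (corner R e)"
      then have x: "x \<in> carrier R" "e \<otimes> x = x" "x \<otimes> e = x" and y: "y \<in> carrier R" "e \<otimes> y = y" "y \<otimes> e = y"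
        using mem by auto
      have "e \<otimes> (x \<otimes> y) = x \<otimes> y" using x y e by (simp add: m_assoc[symmetric])
      moreover have "(x \<otimes> y) \<otimes> e = x \<otimes> y" using x y e by (simp add: m_assoc)
      ultimately show "x \<otimes>\<^bsub>corner R e\<^esub> y \<in> carrier (corner R e)" unfolding corner_simps mem
        using x y by simp
    next
      show "\<one>\<^bsub>corner R e\<^esub> \<in> carrier (corner R e)" unfolding corner_simps mem using e by simp
    next
      fix x y z assume "x \<in> carrier (corner R e)" "y \<in> carrier (corner R e)" "z \<in> carrier (corner R e)"
      then have "x \<in> carrier R" "y \<in> carrier R" "z \<in> carrier R" using mem by auto
      then show "x \<otimes>\<^bsub>corner R e\<^esub> y \<otimes>\<^bsub>corner R e\<^esub> z = x \<otimes>\<^bsub>corner R e\<^esub> (y \<otimes>\<^bsub>corner R e\<^esub> z)"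
        unfolding corner_simps by (rule m_assoc)
    next
      fix x assume "x \<in> carrier (corner R e)"
      then have x: "x \<in> carrier R" "e \<otimes> x = x" "x \<otimes> e = x" using mem by auto
      show "\<one>\<^bsub>corner R e\<^esub> \<otimes>\<^bsub>corner R e\<^esub> x = x" unfolding corner_simps using x by simp
      show "x \<otimes>\<^bsub>corner R e\<^esub> \<one>\<^bsub>corner R e\<^esub> = x" unfolding corner_simps using x by simp
    qed
  next
    fix x y z assume "x \<in> carrier (corner R e)" "y \<in> carrier (corner R e)" "z \<in> carrier (corner R e)"
    then have "x \<in> carrier R" "y \<in> carrier R" "z \<in> carrier R" using mem by auto
    then show "(x \<oplus>\<^bsub>corner R e\<^esub> y) \<otimes>\<^bsub>corner R e\<^esub> z = x \<otimes>\<^bsub>corner R e\<^esub> z \<oplus>\<^bsub>corner R e\<^esub> y \<otimes>\<^bsub>corner R e\<^esub> z"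
      and "z \<otimes>\<^bsub>corner R e\<^esub> (x \<oplus>\<^bsub>corner R e\<^esub> y) = z \<otimes>\<^bsub>corner R e\<^esub> x \<oplus>\<^bsub>corner R e\<^esub> z \<otimes>\<^bsub>corner R e\<^esub> y"
      unfolding corner_simps by (simp_all add: l_distr r_distr)
  qed
qed

lemma (in ring) corner_jac:
  assumes e: "e \<in> carrier R" "e \<otimes> e = e"
    and x: "x \<in> jacobson_radical R" "x \<in> carrier (corner R e)"
  shows "x \<in> jacobson_radical (corner R e)"
proof -
  interpret C: ring "corner R e" by (rule corner_ring[OF e])
  note cc = corner_carrier[OF e]
  have xc: "x \<in> carrier R" "e \<otimes> x = x" "x \<otimes> e = x" using x cc by auto
  have cadd: "\<And>a b. a \<in> carrier (corner R e) \<Longrightarrow> b \<in> carrier (corner R e) \<Longrightarrow> a \<oplus> b \<in> carrier (corner R e)"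
    by (metis C.a_closed corner_simps(4))
  have cmul: "\<And>a b. a \<in> carrier (corner R e) \<Longrightarrow> b \<in> carrier (corner R e) \<Longrightarrow> a \<otimes> b \<in> carrier (corner R e)"
    by (metis C.m_closed corner_simps(1))
  have cneg: "\<And>a. a \<in> carrier (corner R e) \<Longrightarrow> \<ominus> a \<in> carrier (corner R e)"
    using cc e by (auto simp: r_minus l_minus)
  have cinv: "\<And>a. a \<in> carrier (corner R e) \<Longrightarrow> \<ominus>\<^bsub>corner R e\<^esub> a = \<ominus> a"
  proof -
    fix a assume a: "a \<in> carrier (corner R e)"
    have "a \<in> carrier R" using a cc by auto
    then have "\<ominus> a \<oplus>\<^bsub>corner R e\<^esub> a = \<zero>\<^bsub>corner R e\<^esub>" by (simp add: l_neg)
    then show "\<ominus>\<^bsub>corner R e\<^esub> a = \<ominus> a" using C.minus_equality a cneg[OF a] by blast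
  qed
  have cR: "\<And>a. a \<in> carrier (corner R e) \<Longrightarrow> a \<in> carrier R" using cc by auto
  have "x \<in> M" if M: "maximal_left_ideal M (corner R e)" for M
  proof (rule ccontr)
    assume xM: "x \<notin> M"
    have Mli: "left_ideal M (corner R e)" and Mne: "M \<noteq> carrier (corner R e)"
      and Mmax: "\<And>J. left_ideal J (corner R e) \<Longrightarrow> M \<subseteq> J \<Longrightarrow> J = M \<or> J = carrier (corner R e)"
      using M unfolding maximal_left_ideal_def by auto
    have Msub: "additive_subgroup M (corner R e)" and Ml: "\<And>r a. r \<in> carrier (corner R e) \<Longrightarrow> a \<in> M \<Longrightarrow> r \<otimes> a \<in> M"
      using Mli unfolding left_ideal_def by auto
    have Mc: "M \<subseteq> carrier (corner R e)" using additive_subgroup.a_subset[OF Msub] .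
    have Madd: "\<And>a b. a \<in> M \<Longrightarrow> b \<in> M \<Longrightarrow> a \<oplus> b \<in> M"
      by (metis Msub additive_subgroup.a_closed corner_simps(4))
    have Mneg: "\<And>a. a \<in> M \<Longrightarrow> \<ominus> a \<in> M"
      by (metis Msub additive_subgroup.a_inv_closed cinv Mc subsetD)
    have M0: "\<zero> \<in> M" by (metis Msub additive_subgroup.zero_closed corner_simps(3))
    define K where "K = {m \<oplus> s \<otimes> x | m s. m \<in> M \<and> s \<in> carrier (corner R e)}"
    have Kli: "left_ideal K (corner R e)"
    proof (rule C.left_idealI)
      show "K \<subseteq> carrier (corner R e)" unfolding K_def using Mc x(2) cadd cmul by blast
      show "\<zero>\<^bsub>corner R e\<^esub> \<in> K" unfolding K_def using M0 xc
        by (auto intro!: exI[of _ \<zero>] C.zero_closed[simplified])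
    next
      fix a b assume "a \<in> K" "b \<in> K"
      then obtain m1 s1 m2 s2 where h: "m1 \<in> M" "s1 \<in> carrier (corner R e)" "a = m1 \<oplus> s1 \<otimes> x"
        "m2 \<in> M" "s2 \<in> carrier (corner R e)" "b = m2 \<oplus> s2 \<otimes> x" unfolding K_def by auto
      have "a \<oplus> b = (m1 \<oplus> m2) \<oplus> (s1 \<oplus> s2) \<otimes> x"
        using h Mc cR xc by (simp add: l_distr a_ac subset_iff)
      then have "a \<oplus> b \<in> K" unfolding K_def using h Madd[OF h(1) h(4)] cadd[OF h(2) h(5)] by blast
      then show "a \<oplus>\<^bsub>corner R e\<^esub> b \<in> K" by simp
    next
      fix a assume "a \<in> K"
      then obtain m1 s1 where h: "m1 \<in> M" "s1 \<in> carrier (corner R e)" "a = m1 \<oplus> s1 \<otimes> x"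
        unfolding K_def by auto
      have ac: "a \<in> carrier (corner R e)" using h Mc x(2) cadd cmul by blast
      have "\<ominus> a = (\<ominus> m1) \<oplus> (\<ominus> s1) \<otimes> x"
        using h Mc cR xc by (simp add: minus_add l_minus subset_iff)
      then have "\<ominus> a \<in> K" unfolding K_def using h Mneg[OF h(1)] cneg[OF h(2)] by blast
      then show "\<ominus>\<^bsub>corner R e\<^esub> a \<in> K" unfolding cinv[OF ac] .
    next
      fix r a assume r: "r \<in> carrier (corner R e)" and "a \<in> K"
      then obtain m1 s1 where h: "m1 \<in> M" "s1 \<in> carrier (corner R e)" "a = m1 \<oplus> s1 \<otimes> x"
        unfolding K_def by auto
      have "r \<otimes> a = r \<otimes> m1 \<oplus> (r \<otimes> s1) \<otimes> x"
        using h Mc cR xc r by (simp add: r_distr m_assoc subset_iff)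
      then have "r \<otimes> a \<in> K" unfolding K_def using h Ml[OF r h(1)] cmul[OF r h(2)] by blast
      then show "r \<otimes>\<^bsub>corner R e\<^esub> a \<in> K" by simp
    qed
    have "M \<subseteq> K"
    proof
      fix m assume "m \<in> M"
      then have "m = m \<oplus> \<zero> \<otimes> x" "\<zero> \<in> carrier (corner R e)" using Mc cR xc M0 by auto
      then show "m \<in> K" unfolding K_def using \<open>m \<in> M\<close> by blast
    qed
    moreover have "x \<in> K"
    proof -
      have "x = \<zero> \<oplus> e \<otimes> x" "e \<in> carrier (corner R e)" using xc e cc by auto
      then show ?thesis unfolding K_def using M0 by blast
    qed
    ultimately have KC: "K = carrier (corner R e)" using Mmax[OF Kli] xM by blast
    have "e \<in> carrier (corner R e)" using e cc by auto
    then have "e \<in> K" using KC by simp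
    then obtain m s where ms: "m \<in> M" "s \<in> carrier (corner R e)" "e = m \<oplus> s \<otimes> x"
      unfolding K_def by blast
    have sc: "s \<in> carrier R" "e \<otimes> s = s" "s \<otimes> e = s" using ms cc by auto
    have mc: "m \<in> carrier R" using ms Mc cR by blast
    obtain u where u: "u \<in> carrier R" "u \<otimes> (\<one> \<ominus> s \<otimes> x) = \<one>"
      using jac_left_inv[OF x(1) sc(1)] by blast
    have msx: "m = e \<ominus> s \<otimes> x" using ms mc sc xc e
      by (simp add: a_minus_def a_assoc r_neg)
    have esx: "e \<otimes> (s \<otimes> x) = s \<otimes> x" using sc xc e by (simp add: m_assoc[symmetric])
    have sxe: "(s \<otimes> x) \<otimes> e = s \<otimes> x" using sc xc e by (simp add: m_assoc)
    have h1: "(\<one> \<ominus> s \<otimes> x) \<otimes> e = m" using msx sxe sc xc e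
      by (simp add: a_minus_def l_distr l_minus)
    have h2: "e \<otimes> m = m" using msx esx sc xc e
      by (simp add: a_minus_def r_distr r_minus)
    have "(e \<otimes> u \<otimes> e) \<otimes> m = e \<otimes> u \<otimes> (e \<otimes> m)" using u e mc by (simp add: m_assoc)
    also have "\<dots> = e \<otimes> u \<otimes> ((\<one> \<ominus> s \<otimes> x) \<otimes> e)" using h1 h2 by simp
    also have "\<dots> = e \<otimes> (u \<otimes> (\<one> \<ominus> s \<otimes> x)) \<otimes> e" using u(1) e sc xc by (simp add: m_assoc)
    also have "\<dots> = e" using u e by simp
    finally have eue: "(e \<otimes> u \<otimes> e) \<otimes> m = e" .
    have "e \<otimes> (e \<otimes> u \<otimes> e) = e \<otimes> u \<otimes> e" "(e \<otimes> u \<otimes> e) \<otimes> e = e \<otimes> u \<otimes> e"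
      using e u by (simp_all add: m_assoc[symmetric]) (simp add: m_assoc)
    then have "e \<otimes> u \<otimes> e \<in> carrier (corner R e)" using cc e u by auto
    then have eM: "e \<in> M" using Ml[OF _ ms(1)] eue by fastforce
    have "carrier (corner R e) \<subseteq> M"
    proof
      fix r assume r: "r \<in> carrier (corner R e)"
      then have "r \<otimes> e = r" using cc by auto
      then show "r \<in> M" using Ml[OF r eM] by simp
    qed
    then show False using Mne Mc by blast
  qed
  then show ?thesis unfolding jacobson_radical_def using x(2) by blast
qed

lemma (in ring) corner_pow:
  assumes e: "e \<in> carrier R" "e \<otimes> e = e" and y: "y \<in> carrier (corner R e)"
  shows "y [^]\<^bsub>corner R e\<^esub> (Suc n) = y [^]\<^bsub>R\<^esub> (Suc n)"
proof (induction n)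
  case 0
  have "e \<otimes> y = y" "y \<in> carrier R" using y corner_carrier[OF e] by auto
  then show ?case by simp
next
  case (Suc n)
  have 1: "y [^]\<^bsub>corner R e\<^esub> Suc (Suc n) = y [^]\<^bsub>corner R e\<^esub> (Suc n) \<otimes>\<^bsub>corner R e\<^esub> y" by (rule Group.nat_pow_Suc)
  have 2: "y [^]\<^bsub>R\<^esub> Suc (Suc n) = y [^]\<^bsub>R\<^esub> (Suc n) \<otimes>\<^bsub>R\<^esub> y" by (rule Group.nat_pow_Suc)
  show ?case unfolding 1 2 Suc.IH by simp
qed

lemma (in ring) forward:
  assumes NJ: "NJ_symmetric R" and e: "e \<in> carrier R" "e \<otimes> e = e"
  shows "NJ_symmetric (corner R e)"
proof -
    interpret C: ring "corner R e" by (rule corner_ring[OF e])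
    note cc = corner_carrier[OF e]
    have cmul: "\<And>a b. a \<in> carrier (corner R e) \<Longrightarrow> b \<in> carrier (corner R e) \<Longrightarrow> a \<otimes> b \<in> carrier (corner R e)"
      by (metis C.m_closed corner_simps(1))
    have cR: "\<And>a. a \<in> carrier (corner R e) \<Longrightarrow> a \<in> carrier R" using cc by auto
    show "NJ_symmetric (corner R e)" unfolding NJ_symmetric_def corner_simps
    proof (intro ballI impI)
      fix a b c assume abc: "a \<in> carrier (corner R e)" "b \<in> carrier (corner R e)" "c \<in> carrier (corner R e)"
        and nil: "a \<otimes> b \<otimes> c \<in> nilpotents (corner R e)"
      have pC: "a \<otimes> b \<otimes> c \<in> carrier (corner R e)" using abc cmul by blast
      then have pR: "a \<otimes> b \<otimes> c \<in> carrier R" using cR by blast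
      obtain n :: nat where n: "(a \<otimes> b \<otimes> c) [^]\<^bsub>corner R e\<^esub> n = \<zero>"
        using nil unfolding nilpotents_def corner_simps by blast
      have "a \<otimes> b \<otimes> c \<in> nilpotents R"
      proof (cases n)
        case 0
        then have "e = \<zero>" using n by simp
        then have "a \<otimes> b \<otimes> c = \<zero>" using pC cc by auto
        then show ?thesis unfolding nilpotents_def by (auto intro!: exI[of _ 1])
      next
        case (Suc k)
        have "(a \<otimes> b \<otimes> c) [^]\<^bsub>R\<^esub> (Suc k) = \<zero>" using n corner_pow[OF e pC, of k] Suc by simp
        then show ?thesis using pR unfolding nilpotents_def by blast
      qed
      then have "b \<otimes> a \<otimes> c \<in> jacobson_radical R" using NJ abc cR unfolding NJ_symmetric_def by blast
      moreover have "b \<otimes> a \<otimes> c \<in> carrier (corner R e)" using abc cmul by blast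
      ultimately show "b \<otimes> a \<otimes> c \<in> jacobson_radical (corner R e)" using corner_jac[OF e] by blast
    qed
qed

theorem proposition2p19:
  assumes "ring R"
  shows "NJ_symmetric R \<longleftrightarrow>
    (\<forall>e\<in>carrier R. e \<otimes>\<^bsub>R\<^esub> e = e \<longrightarrow> NJ_symmetric (corner R e))"
proof
  assume NJ: "NJ_symmetric R"
  show "\<forall>e\<in>carrier R. e \<otimes>\<^bsub>R\<^esub> e = e \<longrightarrow> NJ_symmetric (corner R e)"
    using ring.forward[OF assms NJ] by blast
next
  assume "\<forall>e\<in>carrier R. e \<otimes>\<^bsub>R\<^esub> e = e \<longrightarrow> NJ_symmetric (corner R e)"
  moreover have "\<one>\<^bsub>R\<^esub> \<in> carrier R" "\<one>\<^bsub>R\<^esub> \<otimes>\<^bsub>R\<^esub> \<one>\<^bsub>R\<^esub> = \<one>\<^bsub>R\<^esub>"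
    using ring.ring_simprules(6)[OF assms] monoid.l_one[OF ring.axioms(2)[OF assms]] by auto
  ultimately have "NJ_symmetric (corner R \<one>\<^bsub>R\<^esub>)" by blast
  then show "NJ_symmetric R" using corner_one[OF assms] by simp
qed

end
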